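(* Consider the following finite dynamic game. There is a finite set of players $\mathcal{I}$ and times $t\in\{1,\dots,T\}$. Each player $i$ has a local state $X_t^i$ (in a finite set $\mathcal{X}_t^i$), $X_t=(X_t^i)_i$, and a local noise process $W_t^i$; players have no initial information. At each time every player $i$ chooses $U_t^i$ (finite set), $U_t=(U_t^i)_i$, and $(X_{t+1}^i,Y_t^i)=f_t^i(X_t^i,U_t,W_t^i)$ for fixed functions $f_t^i$, where $Y_t^i$ is a public observation (finite set), $Y_t=(Y_t^i)_i$. Player $i$'s information at time $t$ is $H_t^i=(Y_{1:t-1},U_{1:t-1},X_{1:t}^i)$, and all of $(X_1^i)_{i}$, $(W_t^i)_{i,t}$ are mutually independent. Then for each player $i$ and time $t$ there exist functions $\xi_t^{g^i}$, depending on the strategy profile only through $g^i$, mapping $(y_{1:t-1},u_{1:t-1})$ to a distribution on $\mathcal{X}_1^i\times\cdots\times\mathcal{X}_t^i$, such that $$\Pr^g(x_{1:t}\mid y_{1:t-1},u_{1:t-1})=\prod_{i\in\mathcal{I}}\xi_t^{g^i}(x_{1:t}^i\mid y_{1:t-1},u_{1:t-1})$$ for all behavioral strategy profiles $g$ and all $(y_{1:t-1},u_{1:t-1})$ with positive probability under $g$.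
   Context: A behavioral strategy $g^i=(g_t^i)_t$ of player $i$ maps each realization of $H_t^i$ to a probability distribution over player $i$'s actions at time $t$; $\Pr^g$ denotes probability under the profile $g=(g^i)_{i\in\mathcal{I}}$. *)

theory Defs
  imports "HOL-Probability.Probability"
begin

(* Times are 0-based: index n stands for time t = n+1.
   A player's information H_t^i = (y_{1:t-1}, u_{1:t-1}, x^i_{1:t}) is a triple of lists. *)

type_synonym ('i,'x,'y,'u) hist = "('i \<Rightarrow> 'y) list \<times> ('i \<Rightarrow> 'u) list \<times> 'x list"

type_synonym ('i,'x,'y,'u) profile = "'i \<Rightarrow> nat \<Rightarrow> ('i,'x,'y,'u) hist \<Rightarrow> 'u pmf"

(* a trajectory prefix (x_{1:t}, y_{1:t-1}, u_{1:t-1}) *)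
type_synonym ('i,'x,'y,'u) traj = "('i \<Rightarrow> 'x) list \<times> ('i \<Rightarrow> 'y) list \<times> ('i \<Rightarrow> 'u) list"

definition game_step ::
  "('i::finite \<Rightarrow> nat \<Rightarrow> 'x \<Rightarrow> ('i \<Rightarrow> 'u) \<Rightarrow> 'w \<Rightarrow> 'x \<times> 'y)
   \<Rightarrow> ('i \<Rightarrow> nat \<Rightarrow> 'w pmf) \<Rightarrow> ('i,'x,'y,'u) profile \<Rightarrow> nat
   \<Rightarrow> ('i,'x,'y,'u) traj \<Rightarrow> ('i,'x,'y,'u) traj pmf" where
  "game_step f W g n tr =
     (case tr of (xs, ys, us) \<Rightarrow>
       do { u \<leftarrow> Pi_pmf UNIV undefined (\<lambda>i. g i n (ys, us, map (\<lambda>x. x i) xs));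
            w \<leftarrow> Pi_pmf UNIV undefined (\<lambda>i. W i n);
            return_pmf (xs @ [\<lambda>i. fst (f i n (last xs i) u (w i))],
                        ys @ [\<lambda>i. snd (f i n (last xs i) u (w i))],
                        us @ [u]) })"

primrec game_traj ::
  "('i::finite \<Rightarrow> 'x pmf)
   \<Rightarrow> ('i \<Rightarrow> nat \<Rightarrow> 'x \<Rightarrow> ('i \<Rightarrow> 'u) \<Rightarrow> 'w \<Rightarrow> 'x \<times> 'y)
   \<Rightarrow> ('i \<Rightarrow> nat \<Rightarrow> 'w pmf) \<Rightarrow> ('i,'x,'y,'u) profile \<Rightarrow> nat
   \<Rightarrow> ('i,'x,'y,'u) traj pmf" where
  "game_traj P0 f W g 0 = map_pmf (\<lambda>x. ([x], [], [])) (Pi_pmf UNIV undefined P0)"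
| "game_traj P0 f W g (Suc n) = bind_pmf (game_traj P0 f W g n) (game_step f W g n)"

definition prob_yu where
  "prob_yu P0 f W g n ys us =
     measure_pmf.prob (game_traj P0 f W g n) {tr. fst (snd tr) = ys \<and> snd (snd tr) = us}"

definition cond_prob_x where
  "cond_prob_x P0 f W g n xs ys us =
     pmf (game_traj P0 f W g n) (xs, ys, us) / prob_yu P0 f W g n ys us"

definition behavioral_profile where
  "behavioral_profile Us g \<longleftrightarrow> (\<forall>i n h. set_pmf (g i n h) \<subseteq> Us i n)"

end

theory Submission
  imports Defs
begin


lemma pmf_bind_single:
  assumes "\<And>b. b \<in> set_pmf p \<Longrightarrow> b \<noteq> a \<Longrightarrow> pmf (K b) x = 0"
  shows "pmf (bind_pmf p K) x = pmf p a * pmf (K a) x"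
proof -
  have "pmf (bind_pmf p K) x = (\<integral>b. pmf (K b) x \<partial>measure_pmf p)" by (rule pmf_bind)
  also have "\<dots> = (\<Sum>b\<in>{a}. pmf p b *\<^sub>R pmf (K b) x)"
    by (rule integral_measure_pmf) (use assms in auto)
  finally show ?thesis by simp
qed

lemma set_game_step:
  assumes "tr' \<in> set_pmf (game_step f W g n (xs,ys,us))"
  shows "\<exists>u w. tr' = (xs @ [\<lambda>i. fst (f i n (last xs i) u (w i))],
                     ys @ [\<lambda>i. snd (f i n (last xs i) u (w i))], us @ [u])
          \<and> (\<forall>i. u i \<in> set_pmf (g i n (ys, us, map (\<lambda>x. x i) xs)))"
  using assms by (auto simp: game_step_def set_Pi_pmf PiE_dflt_def)

lemma traj_len:
  "tr \<in> set_pmf (game_traj P0 f W g n) \<Longrightarrow>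
     length (fst tr) = Suc n \<and> length (fst (snd tr)) = n \<and> length (snd (snd tr)) = n"
proof (induction n arbitrary: tr)
  case 0
  then show ?case by auto
next
  case (Suc n)
  then obtain tr0 where tr0: "tr0 \<in> set_pmf (game_traj P0 f W g n)"
    "tr \<in> set_pmf (game_step f W g n tr0)" by auto
  obtain xs ys us where [simp]: "tr0 = (xs,ys,us)" by (cases tr0) auto
  from Suc.IH[OF tr0(1)] set_game_step[of tr f W g n xs ys us] tr0(2) show ?case by auto
qed

lemma traj_mem:
  assumes init: "\<And>i. set_pmf (P0 i) \<subseteq> Xs i 0"
    and dyn: "\<And>i n x u w. x \<in> Xs i n \<Longrightarrow> (\<forall>j. u j \<in> Us j n) \<Longrightarrow>
                f i n x u w \<in> Xs i (Suc n) \<times> Ys i n"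
    and beh: "behavioral_profile Us g"
  shows "tr \<in> set_pmf (game_traj P0 f W g n) \<Longrightarrow>
     (\<forall>k\<le>n. \<forall>i. (fst tr ! k) i \<in> Xs i k) \<and> (\<forall>k<n. \<forall>i. (snd (snd tr) ! k) i \<in> Us i k)"
proof (induction n arbitrary: tr)
  case 0
  then show ?case using init by (fastforce simp: set_Pi_pmf PiE_dflt_def)
next
  case (Suc n)
  then obtain tr0 where tr0: "tr0 \<in> set_pmf (game_traj P0 f W g n)"
    "tr \<in> set_pmf (game_step f W g n tr0)" by auto
  obtain xs ys us where [simp]: "tr0 = (xs,ys,us)" by (cases tr0) auto
  have IH: "\<forall>k\<le>n. \<forall>i. (xs ! k) i \<in> Xs i k" "\<forall>k<n. \<forall>i. (us ! k) i \<in> Us i k"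
    using Suc.IH[OF tr0(1)] by auto
  have len: "length xs = Suc n" "length us = n" using traj_len[OF tr0(1)] by auto
  obtain u w where tr: "tr = (xs @ [\<lambda>i. fst (f i n (last xs i) u (w i))],
                     ys @ [\<lambda>i. snd (f i n (last xs i) u (w i))], us @ [u])"
     and u: "\<forall>i. u i \<in> set_pmf (g i n (ys, us, map (\<lambda>x. x i) xs))"
    using set_game_step[OF tr0(2)[simplified]] by blast
  have uU: "\<forall>j. u j \<in> Us j n" using u beh unfolding behavioral_profile_def by blast
  have lastx: "\<And>i. last xs i \<in> Xs i n"
  proof -
    fix i
    have "last xs = xs ! n" using len by (subst last_conv_nth) auto
    then show "last xs i \<in> Xs i n" using IH(1) by simp
  qed
  have "\<forall>k\<le>Suc n. \<forall>i. (fst tr ! k) i \<in> Xs i k"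
  proof (intro allI impI)
    fix k i assume "k \<le> Suc n"
    then consider "k \<le> n" | "k = Suc n" by linarith
    then show "(fst tr ! k) i \<in> Xs i k"
    proof cases
      case 1 then show ?thesis using IH(1) len by (simp add: tr nth_append)
    next
      case 2 then show ?thesis using dyn[OF lastx uU, of i] len
        by (simp add: tr nth_append mem_Times_iff)
    qed
  qed
  moreover have "\<forall>k<Suc n. \<forall>i. (snd (snd tr) ! k) i \<in> Us i k"
    using IH(2) len uU by (auto simp: tr nth_append less_Suc_eq)
  ultimately show ?case by blast
qed

lemma pmf_game_step:
  fixes g :: "('i::finite,'x,'y,'u) profile"
  shows "pmf (game_step f W g n (xs,ys,us)) (xs@[x'], ys@[y'], us@[u']) =
    (\<Prod>i\<in>UNIV. pmf (g i n (ys,us,map (\<lambda>x. x i) xs)) (u' i)) *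
    (\<Prod>i\<in>UNIV. pmf (map_pmf (f i n (last xs i) u') (W i n)) (x' i, y' i))"
proof -
  define U where "U = Pi_pmf UNIV undefined (\<lambda>i. g i n (ys, us, map (\<lambda>x. x i) xs))"
  define V where "V = Pi_pmf UNIV undefined (\<lambda>i. W i n)"
  define H where "H = (\<lambda>u w. (xs @ [\<lambda>i. fst (f i n (last xs i) u (w i))],
                        ys @ [\<lambda>i. snd (f i n (last xs i) u (w i))], us @ [u]))"
  have gs: "game_step f W g n (xs,ys,us) = bind_pmf U (\<lambda>u. map_pmf (H u) V)"
    unfolding game_step_def U_def V_def H_def map_pmf_def by simp
  have "pmf (bind_pmf U (\<lambda>u. map_pmf (H u) V)) (xs@[x'], ys@[y'], us@[u']) =
        pmf U u' * pmf (map_pmf (H u') V) (xs@[x'], ys@[y'], us@[u'])"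
  proof (rule pmf_bind_single)
    fix b assume "b \<noteq> u'"
    then have "(xs@[x'], ys@[y'], us@[u']) \<notin> set_pmf (map_pmf (H b) V)"
      by (auto simp: H_def)
    then show "pmf (map_pmf (H b) V) (xs@[x'], ys@[y'], us@[u']) = 0"
      by (simp add: pmf_eq_0_set_pmf)
  qed
  also have "pmf U u' = (\<Prod>i\<in>UNIV. pmf (g i n (ys,us,map (\<lambda>x. x i) xs)) (u' i))"
    unfolding U_def by (rule pmf_Pi') auto
  also have "pmf (map_pmf (H u') V) (xs@[x'], ys@[y'], us@[u']) =
      measure_pmf.prob V (Pi UNIV (\<lambda>i. {w. f i n (last xs i) u' w = (x' i, y' i)}))"
  proof -
    have "H u' -` {(xs@[x'], ys@[y'], us@[u'])} = Pi UNIV (\<lambda>i. {w. f i n (last xs i) u' w = (x' i, y' i)})"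
      by (auto simp: H_def fun_eq_iff prod_eq_iff)
    then show ?thesis by (simp add: pmf_map)
  qed
  also have "\<dots> = (\<Prod>i\<in>UNIV. pmf (map_pmf (f i n (last xs i) u') (W i n)) (x' i, y' i))"
    unfolding V_def by (subst measure_Pi_pmf_Pi) (auto simp: pmf_map vimage_def)
  finally show ?thesis using gs by simp
qed

primrec FF :: "('i \<Rightarrow> 'x pmf) \<Rightarrow> ('i \<Rightarrow> nat \<Rightarrow> 'x \<Rightarrow> ('i \<Rightarrow> 'u) \<Rightarrow> 'w \<Rightarrow> 'x \<times> 'y)
   \<Rightarrow> ('i \<Rightarrow> nat \<Rightarrow> 'w pmf) \<Rightarrow> 'i \<Rightarrow> (nat \<Rightarrow> ('i,'x,'y,'u) hist \<Rightarrow> 'u pmf) \<Rightarrow> nat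
   \<Rightarrow> ('i \<Rightarrow> 'y) list \<Rightarrow> ('i \<Rightarrow> 'u) list \<Rightarrow> 'x list \<Rightarrow> real" where
  "FF P0 f W i gi 0 ys us l =
     (if ys = [] \<and> us = [] \<and> length l = 1 then pmf (P0 i) (hd l) else 0)"
| "FF P0 f W i gi (Suc n) ys us l =
     (if ys \<noteq> [] \<and> us \<noteq> [] \<and> length l \<ge> 2 then
        FF P0 f W i gi n (butlast ys) (butlast us) (butlast l) *
        pmf (gi n (butlast ys, butlast us, butlast l)) (last us i) *
        pmf (map_pmf (f i n (last (butlast l)) (last us)) (W i n)) (last l, last ys i)
      else 0)"

lemma FF_nonneg: "FF P0 f W i gi n ys us l \<ge> 0"
  by (induction n arbitrary: ys us l) auto

lemma pmf_game_traj:
  fixes P0 :: "'i::finite \<Rightarrow> 'x pmf"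
  shows "pmf (game_traj P0 f W g n) (xs,ys,us) =
         (\<Prod>i\<in>UNIV. FF P0 f W i (g i) n ys us (map (\<lambda>x. x i) xs))"
proof (induction n arbitrary: xs ys us)
  case 0
  show ?case
  proof (cases "ys = [] \<and> us = [] \<and> length xs = 1")
    case True
    then obtain x where [simp]: "xs = [x]" "ys = []" "us = []"
      by (metis One_nat_def length_0_conv length_Suc_conv)
    have "inj (\<lambda>x::'i\<Rightarrow>'x. ([x], [] :: ('i\<Rightarrow>'y) list, [] :: ('i\<Rightarrow>'u) list))"
      by (auto intro: injI)
    from pmf_map_inj'[OF this, of "Pi_pmf UNIV undefined P0" x]
    have "pmf (game_traj P0 f W g 0) (xs,ys,us) = pmf (Pi_pmf UNIV undefined P0) x"
      by simp
    also have "\<dots> = (\<Prod>i\<in>UNIV. pmf (P0 i) (x i))" by (rule pmf_Pi') auto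
    finally show ?thesis by simp
  next
    case False
    then have "(xs,ys,us) \<notin> set_pmf (game_traj P0 f W g 0)" by auto
    then have "pmf (game_traj P0 f W g 0) (xs,ys,us) = 0" by (simp add: pmf_eq_0_set_pmf)
    moreover have "(\<Prod>i\<in>UNIV. FF P0 f W i (g i) 0 ys us (map (\<lambda>x. x i) xs)) = 0"
      using False by (intro prod_zero) (auto intro!: bexI[of _ undefined])
    ultimately show ?thesis by simp
  qed
next
  case (Suc n)
  show ?case
  proof (cases "ys \<noteq> [] \<and> us \<noteq> [] \<and> length xs \<ge> 2")
    case True
    define xs0 where "xs0 = butlast xs"
    define ys0 where "ys0 = butlast ys"
    define us0 where "us0 = butlast us"
    have xs: "xs = xs0 @ [last xs]" "ys = ys0 @ [last ys]" "us = us0 @ [last us]"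
    proof -
      have "xs \<noteq> []" using True by auto
      then show "xs = xs0 @ [last xs]" "ys = ys0 @ [last ys]" "us = us0 @ [last us]"
        using True by (auto simp: xs0_def ys0_def us0_def)
    qed
    have xs0ne: "xs0 \<noteq> []" using True by (cases xs rule: rev_cases) (auto simp: xs0_def)
    have "pmf (game_traj P0 f W g (Suc n)) (xs,ys,us) =
          pmf (game_traj P0 f W g n) (xs0,ys0,us0) * pmf (game_step f W g n (xs0,ys0,us0)) (xs,ys,us)"
      unfolding game_traj.simps
    proof (rule pmf_bind_single)
      fix b assume "b \<noteq> (xs0, ys0, us0)"
      have "(xs,ys,us) \<notin> set_pmf (game_step f W g n b)"
      proof
        assume a: "(xs,ys,us) \<in> set_pmf (game_step f W g n b)"
        obtain xb yb ub where b: "b = (xb,yb,ub)" by (cases b) auto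
        from set_game_step[OF a[unfolded b]] obtain u w where
          eq: "(xs,ys,us) = (xb @ [\<lambda>i. fst (f i n (last xb i) u (w i))],
                     yb @ [\<lambda>i. snd (f i n (last xb i) u (w i))], ub @ [u])" by blast
        then have "xb = xs0" "yb = ys0" "ub = us0" by (auto simp: xs0_def ys0_def us0_def)
        then show False using b \<open>b \<noteq> (xs0, ys0, us0)\<close> by simp
      qed
      then show "pmf (game_step f W g n b) (xs,ys,us) = 0" by (simp add: pmf_eq_0_set_pmf)
    qed
    also have "pmf (game_step f W g n (xs0,ys0,us0)) (xs,ys,us) =
      (\<Prod>i\<in>UNIV. pmf (g i n (ys0,us0,map (\<lambda>x. x i) xs0)) (last us i)) *
      (\<Prod>i\<in>UNIV. pmf (map_pmf (f i n (last xs0 i) (last us)) (W i n)) (last xs i, last ys i))"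
      by (subst (1) xs, subst (1) xs, subst (1) xs, rule pmf_game_step)
    also have "pmf (game_traj P0 f W g n) (xs0,ys0,us0) =
         (\<Prod>i\<in>UNIV. FF P0 f W i (g i) n ys0 us0 (map (\<lambda>x. x i) xs0))" by (rule Suc.IH)
    also have "(\<Prod>i\<in>UNIV. FF P0 f W i (g i) (Suc n) ys us (map (\<lambda>x. x i) xs)) =
       (\<Prod>i\<in>UNIV. FF P0 f W i (g i) n ys0 us0 (map (\<lambda>x. x i) xs0) *
          pmf (g i n (ys0,us0,map (\<lambda>x. x i) xs0)) (last us i) *
          pmf (map_pmf (f i n (last xs0 i) (last us)) (W i n)) (last xs i, last ys i))"
    proof (rule prod.cong)
      fix i
      have "xs \<noteq> []" using True by auto
      then show "FF P0 f W i (g i) (Suc n) ys us (map (\<lambda>x. x i) xs) =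
          FF P0 f W i (g i) n ys0 us0 (map (\<lambda>x. x i) xs0) *
          pmf (g i n (ys0,us0,map (\<lambda>x. x i) xs0)) (last us i) *
          pmf (map_pmf (f i n (last xs0 i) (last us)) (W i n)) (last xs i, last ys i)"
        using True xs0ne by (simp add: map_butlast[symmetric] last_map xs0_def ys0_def us0_def)
    qed simp
    ultimately show ?thesis by (simp add: prod.distrib mult.assoc)
  next
    case False
    have "(xs,ys,us) \<notin> set_pmf (game_traj P0 f W g (Suc n))"
    proof
      assume "(xs,ys,us) \<in> set_pmf (game_traj P0 f W g (Suc n))"
      then obtain tr0 where tr0: "tr0 \<in> set_pmf (game_traj P0 f W g n)"
        "(xs,ys,us) \<in> set_pmf (game_step f W g n tr0)" by auto
      obtain a b c where [simp]: "tr0 = (a,b,c)" by (cases tr0) auto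
      have "length a = Suc n" using traj_len[OF tr0(1)] by simp
      then show False using set_game_step[OF tr0(2)[simplified]] False by force
    qed
    then have "pmf (game_traj P0 f W g (Suc n)) (xs,ys,us) = 0" by (simp add: pmf_eq_0_set_pmf)
    moreover have "(\<Prod>i\<in>UNIV. FF P0 f W i (g i) (Suc n) ys us (map (\<lambda>x. x i) xs)) = 0"
      using False by (intro prod_zero) (auto intro!: bexI[of _ undefined])
    ultimately show ?thesis by simp
  qed
qed


theorem lemma12:
  fixes P0 :: "'i::finite \<Rightarrow> 'x pmf"
    and f :: "'i \<Rightarrow> nat \<Rightarrow> 'x \<Rightarrow> ('i \<Rightarrow> 'u) \<Rightarrow> 'w \<Rightarrow> 'x \<times> 'y"
    and W :: "'i \<Rightarrow> nat \<Rightarrow> 'w pmf"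
    and Xs :: "'i \<Rightarrow> nat \<Rightarrow> 'x set"
    and Us :: "'i \<Rightarrow> nat \<Rightarrow> 'u set"
    and Ys :: "'i \<Rightarrow> nat \<Rightarrow> 'y set"
    and T :: nat
  assumes finX: "\<And>i n. finite (Xs i n)"
    and finU: "\<And>i n. finite (Us i n)"
    and finY: "\<And>i n. finite (Ys i n)"
    and init: "\<And>i. set_pmf (P0 i) \<subseteq> Xs i 0"
    and dyn: "\<And>i n x u w. x \<in> Xs i n \<Longrightarrow> (\<forall>j. u j \<in> Us j n) \<Longrightarrow>
                f i n x u w \<in> Xs i (Suc n) \<times> Ys i n"
  shows "\<exists>\<xi> :: 'i \<Rightarrow> nat \<Rightarrow> (nat \<Rightarrow> ('i,'x,'y,'u) hist \<Rightarrow> 'u pmf)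
                  \<Rightarrow> ('i \<Rightarrow> 'y) list \<Rightarrow> ('i \<Rightarrow> 'u) list \<Rightarrow> 'x list pmf.
           \<forall>g. behavioral_profile Us g \<longrightarrow>
             (\<forall>n < T. \<forall>ys us. prob_yu P0 f W g n ys us > 0 \<longrightarrow>
                (\<forall>i. set_pmf (\<xi> i n (g i) ys us) \<subseteq>
                       {xs. length xs = Suc n \<and> (\<forall>k \<le> n. xs ! k \<in> Xs i k)}) \<and>
                (\<forall>xs. cond_prob_x P0 f W g n xs ys us =
                       (\<Prod>i\<in>UNIV. pmf (\<xi> i n (g i) ys us) (map (\<lambda>x. x i) xs))))"
  proof -
  define S where "S i n = {l::'x list. length l = Suc n \<and> (\<forall>k\<le>n. l!k \<in> Xs i k)}" for i n
  have finS: "finite (S i n)" for i n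
  proof (rule finite_subset)
    show "S i n \<subseteq> {l. set l \<subseteq> (\<Union>k\<le>n. Xs i k) \<and> length l = Suc n}"
    proof
      fix l assume l: "l \<in> S i n"
      have "set l \<subseteq> (\<Union>k\<le>n. Xs i k)"
      proof
        fix x assume "x \<in> set l"
        then obtain k where "k < length l" "x = l ! k" by (auto simp: in_set_conv_nth)
        then show "x \<in> (\<Union>k\<le>n. Xs i k)" using l by (auto simp: S_def less_Suc_eq_le intro!: bexI[of _ k])
      qed
      then show "l \<in> {l. set l \<subseteq> (\<Union>k\<le>n. Xs i k) \<and> length l = Suc n}" using l by (simp add: S_def)
    qed
    show "finite {l. set l \<subseteq> (\<Union>k\<le>n. Xs i k) \<and> length l = Suc n}"
      by (rule finite_lists_length_eq) (auto intro: finX)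
  qed
  define Z where "Z i gi n ys us = (\<Sum>l\<in>S i n. FF P0 f W i gi n ys us l)" for i gi n ys us
  define \<xi> where "\<xi> i n gi ys us = embed_pmf (\<lambda>l. if l \<in> S i n then FF P0 f W i gi n ys us l / Z i gi n ys us else 0)"
    for i n gi ys us
  show ?thesis
  proof (rule exI[of _ \<xi>], intro allI impI)
    fix g :: "('i,'x,'y,'u) profile" and n ys us
    assume beh: "behavioral_profile Us g" and "n < T" and pos: "prob_yu P0 f W g n ys us > 0"
    define G where "G = game_traj P0 f W g n"
    define U where "U L = map (\<lambda>k. \<lambda>i. L i ! k) [0..<Suc n]" for L :: "'i \<Rightarrow> 'x list"
    have TU: "(\<lambda>i. map (\<lambda>x. x i) (U L)) = L" if "L \<in> PiE UNIV (\<lambda>i. S i n)" for L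
    proof
      fix i
      have "length (L i) = Suc n" using that by (auto simp: S_def)
      then show "map (\<lambda>x. x i) (U L) = L i"
        using \<open>length (L i) = Suc n\<close> by (intro nth_equalityI) (simp_all del: upt_Suc add: U_def)
    qed
    have inset: "(\<lambda>i. map (\<lambda>x. x i) xs) \<in> PiE UNIV (\<lambda>i. S i n) \<and> U (\<lambda>i. map (\<lambda>x. x i) xs) = xs"
      if "(xs, ys', us') \<in> set_pmf G" for xs ys' us'
    proof -
      have len: "length xs = Suc n" using traj_len[OF that[unfolded G_def]] by simp
      have mem: "\<forall>k\<le>n. \<forall>i. (xs ! k) i \<in> Xs i k"
        using traj_mem[OF init dyn beh that[unfolded G_def]] by simp
      have "(\<lambda>i. map (\<lambda>x. x i) xs) \<in> PiE UNIV (\<lambda>i. S i n)"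
        using len mem by (auto simp: S_def PiE_UNIV_domain)
      moreover have "U (\<lambda>i. map (\<lambda>x. x i) xs) = xs"
        using len by (intro nth_equalityI) (simp_all del: upt_Suc add: U_def)
      ultimately show ?thesis by blast
    qed
    define E where "E = {tr::('i,'x,'y,'u) traj. fst (snd tr) = ys \<and> snd (snd tr) = us}"
    define A where "A = (\<lambda>L. (U L, ys, us)) ` PiE UNIV (\<lambda>i. S i n)"
    have finA: "finite A" unfolding A_def by (intro finite_imageI finite_PiE) (auto intro: finS)
    have EA: "E \<inter> set_pmf G = A \<inter> set_pmf G"
    proof
      show "E \<inter> set_pmf G \<subseteq> A \<inter> set_pmf G"
      proof
        fix tr assume tr: "tr \<in> E \<inter> set_pmf G"
        obtain xs ys' us' where tr': "tr = (xs,ys',us')" by (cases tr) auto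
        have "ys' = ys" "us' = us" using tr tr' by (auto simp: E_def)
        with inset[of xs ys' us'] tr tr' show "tr \<in> A \<inter> set_pmf G"
          unfolding A_def by (auto intro!: image_eqI[of _ _ "\<lambda>i. map (\<lambda>x. x i) xs"])
      qed
      show "A \<inter> set_pmf G \<subseteq> E \<inter> set_pmf G" by (auto simp: A_def E_def)
    qed
    have injU: "inj_on (\<lambda>L. (U L, ys, us)) (PiE UNIV (\<lambda>i. S i n))"
    proof (rule inj_onI)
      fix L L' assume "L \<in> PiE UNIV (\<lambda>i. S i n)" "L' \<in> PiE UNIV (\<lambda>i. S i n)"
        "(U L, ys, us) = (U L', ys, us)"
      then have "(\<lambda>i. map (\<lambda>x. x i) (U L)) = (\<lambda>i. map (\<lambda>x. x i) (U L'))" by simp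
      then show "L = L'" using TU[OF \<open>L \<in> _\<close>] TU[OF \<open>L' \<in> _\<close>] by simp
    qed
    have prob: "prob_yu P0 f W g n ys us = (\<Prod>i\<in>UNIV. Z i (g i) n ys us)"
    proof -
      have "prob_yu P0 f W g n ys us = measure_pmf.prob G E"
        by (simp add: prob_yu_def G_def E_def)
      also have "\<dots> = measure_pmf.prob G (E \<inter> set_pmf G)" by (simp add: measure_Int_set_pmf)
      also have "\<dots> = measure_pmf.prob G A" by (simp add: EA measure_Int_set_pmf)
      also have "\<dots> = sum (pmf G) A" by (rule measure_measure_pmf_finite[OF finA])
      also have "\<dots> = (\<Sum>L\<in>PiE UNIV (\<lambda>i. S i n). pmf G (U L, ys, us))"
        unfolding A_def by (subst sum.reindex[OF injU]) simp
      also have "\<dots> = (\<Sum>L\<in>PiE UNIV (\<lambda>i. S i n). \<Prod>i\<in>UNIV. FF P0 f W i (g i) n ys us (L i))"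
      proof (rule sum.cong)
        fix L assume L: "L \<in> PiE UNIV (\<lambda>i. S i n)"
        have "pmf G (U L, ys, us) = (\<Prod>i\<in>UNIV. FF P0 f W i (g i) n ys us (map (\<lambda>x. x i) (U L)))"
          unfolding G_def by (rule pmf_game_traj)
        also have "\<dots> = (\<Prod>i\<in>UNIV. FF P0 f W i (g i) n ys us (L i))"
        proof (rule prod.cong)
          fix i show "FF P0 f W i (g i) n ys us (map (\<lambda>x. x i) (U L)) = FF P0 f W i (g i) n ys us (L i)"
            using fun_cong[OF TU[OF L], of i] by simp
        qed simp
        finally show "pmf G (U L, ys, us) = (\<Prod>i\<in>UNIV. FF P0 f W i (g i) n ys us (L i))" .
      qed simp
      also have "\<dots> = (\<Prod>i\<in>UNIV. Z i (g i) n ys us)"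
        unfolding Z_def by (rule prod_sum_PiE[symmetric]) (auto intro: finS)
      finally show ?thesis .
    qed
    have Znn: "Z i (g i) n ys us \<ge> 0" for i unfolding Z_def by (intro sum_nonneg FF_nonneg)
    have Zpos: "Z i (g i) n ys us > 0" for i
    proof (rule ccontr)
      assume "\<not> Z i (g i) n ys us > 0"
      then have "Z i (g i) n ys us = 0" using Znn[of i] by linarith
      then have "(\<Prod>i\<in>UNIV. Z i (g i) n ys us) = 0" by (intro prod_zero) auto
      then show False using pos prob by linarith
    qed
    have pmfxi: "pmf (\<xi> i n (g i) ys us) l =
        (if l \<in> S i n then FF P0 f W i (g i) n ys us l / Z i (g i) n ys us else 0)" for i l
      unfolding \<xi>_def
    proof (rule pmf_embed_pmf)
      show "\<And>x. 0 \<le> (if x \<in> S i n then FF P0 f W i (g i) n ys us x / Z i (g i) n ys us else 0)"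
        by (auto intro!: divide_nonneg_nonneg FF_nonneg Znn)
      have "(\<integral>\<^sup>+x. ennreal (if x \<in> S i n then FF P0 f W i (g i) n ys us x / Z i (g i) n ys us else 0)
              \<partial>count_space UNIV) =
            (\<Sum>x\<in>S i n. ennreal (if x \<in> S i n then FF P0 f W i (g i) n ys us x / Z i (g i) n ys us else 0))"
        by (rule nn_integral_count_space') (auto intro: finS)
      also have "\<dots> = ennreal (\<Sum>x\<in>S i n. FF P0 f W i (g i) n ys us x / Z i (g i) n ys us)"
        by (subst sum_ennreal[symmetric]) (auto intro!: divide_nonneg_nonneg FF_nonneg Znn)
      also have "(\<Sum>x\<in>S i n. FF P0 f W i (g i) n ys us x / Z i (g i) n ys us) = 1"
        using Zpos[of i] by (simp add: sum_divide_distrib[symmetric] Z_def)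
      finally show "(\<integral>\<^sup>+x. ennreal (if x \<in> S i n then FF P0 f W i (g i) n ys us x / Z i (g i) n ys us else 0)
              \<partial>count_space UNIV) = 1" by simp
    qed
    have part1: "\<forall>i. set_pmf (\<xi> i n (g i) ys us) \<subseteq>
                       {xs. length xs = Suc n \<and> (\<forall>k \<le> n. xs ! k \<in> Xs i k)}"
    proof (intro allI subsetI)
      fix i l assume "l \<in> set_pmf (\<xi> i n (g i) ys us)"
      then have "pmf (\<xi> i n (g i) ys us) l \<noteq> 0" by (simp add: set_pmf_iff)
      then have "l \<in> S i n" by (simp add: pmfxi split: if_splits)
      then show "l \<in> {xs. length xs = Suc n \<and> (\<forall>k \<le> n. xs ! k \<in> Xs i k)}" by (simp add: S_def)
    qed
    have part2: "cond_prob_x P0 f W g n xs ys us =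
                       (\<Prod>i\<in>UNIV. pmf (\<xi> i n (g i) ys us) (map (\<lambda>x. x i) xs))" for xs
    proof (cases "\<forall>i. map (\<lambda>x. x i) xs \<in> S i n")
      case True
      have "cond_prob_x P0 f W g n xs ys us =
          (\<Prod>i\<in>UNIV. FF P0 f W i (g i) n ys us (map (\<lambda>x. x i) xs)) / (\<Prod>i\<in>UNIV. Z i (g i) n ys us)"
        unfolding cond_prob_x_def prob pmf_game_traj ..
      also have "\<dots> = (\<Prod>i\<in>UNIV. FF P0 f W i (g i) n ys us (map (\<lambda>x. x i) xs) / Z i (g i) n ys us)"
        by (simp add: prod_dividef)
      also have "\<dots> = (\<Prod>i\<in>UNIV. pmf (\<xi> i n (g i) ys us) (map (\<lambda>x. x i) xs))"
        using True by (simp add: pmfxi)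
      finally show ?thesis .
    next
      case False
      then obtain j where j: "map (\<lambda>x. x j) xs \<notin> S j n" by blast
      have "(xs,ys,us) \<notin> set_pmf G" using inset[of xs ys us] j by (auto simp: PiE_UNIV_domain)
      then have "pmf G (xs,ys,us) = 0" by (simp add: pmf_eq_0_set_pmf)
      then have "cond_prob_x P0 f W g n xs ys us = 0" by (simp add: cond_prob_x_def G_def)
      moreover have "(\<Prod>i\<in>UNIV. pmf (\<xi> i n (g i) ys us) (map (\<lambda>x. x i) xs)) = 0"
        using j by (intro prod_zero) (auto simp: pmfxi intro!: bexI[of _ j])
      ultimately show ?thesis by simp
    qed
    show "(\<forall>i. set_pmf (\<xi> i n (g i) ys us) \<subseteq>
                       {xs. length xs = Suc n \<and> (\<forall>k \<le> n. xs ! k \<in> Xs i k)}) \<and>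
          (\<forall>xs. cond_prob_x P0 f W g n xs ys us =
                       (\<Prod>i\<in>UNIV. pmf (\<xi> i n (g i) ys us) (map (\<lambda>x. x i) xs)))"
      using part1 part2 by blast
  qed
qed

end
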